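(* Let $\pi$ be a probability measure on $\mathcal{B}_n=\{0,1\}^n$ and let $L$ be the generator of a $\pi$-reversible flip-swap random walk on $\mathcal{B}_n$ which is $R$-stable for some $R\ge0$. Then for any nonempty $A\subset\mathcal{B}_n$, \[ \pi(A)\,\pi\Big(\exp\Big(\frac{1}{40R+4}\,d_T^2(\cdot,A)\Big)\Big)\le1, \] where $d_T(x,A)=\sup\{d_\alpha(x,A):\alpha\in[0,\infty)^n,|\alpha|\le1\}$.
   Context: A generator on $\mathcal{B}_n$ is a real matrix $L=(L(x,y))$ with $L(x,y)\ge0$ for $x\ne y$ and zero row sums; it is $\pi$-reversible if $\pi(x)L(x,y)=\pi(y)L(y,x)$. With $(Lg)(x)=\sum_yL(x,y)g(y)$, $\mathcal{E}(f,g)=-\sum_x\pi(x)f(x)(Lg)(x)$ and $\mathrm{Ent}_\pi(f)=\pi(f\log f)-\pi(f)\log\pi(f)$, $\rho(L)$ is the largest constant with $\rho(L)\mathrm{Ent}_\pi(f)\le\mathcal{E}(f,\log f)$ for all non-constant $f\colon\mathcal{B}_n\to[0,\infty)$. Flip-swap: $L(x,y)>0$, $x\ne y$, implies $y$ differs from $x$ by flipping one coordinate or swapping two unequal coordinates. $R$-stable: $\rho(L)>0$ and $\max_{x\in\mathrm{supp}\,\pi,\,i\in[n]}\sum_{y:y_i\ne x_i}L(x,y)\le R\rho(L)$. $d_\alpha(x,y)=\sum_i\alpha_i\mathbf{1}\{x_i\ne y_i\}$, $d_\alpha(x,A)=\min_{y\in A}d_\alpha(x,y)$, $|\alpha|$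 Euclidean norm, $\pi(g)=\int g\,d\pi$. *)

theory Defs
  imports Complex_Main
begin

text \<open>The hypercube B_n is modelled as the type of functions from a finite
  index type 'n (with CARD('n) = n) to bool.\<close>

definition generator :: "(('n::finite \<Rightarrow> bool) \<Rightarrow> ('n \<Rightarrow> bool) \<Rightarrow> real) \<Rightarrow> bool" where
  "generator L \<longleftrightarrow> (\<forall>x y. x \<noteq> y \<longrightarrow> L x y \<ge> 0) \<and> (\<forall>x. (\<Sum>y\<in>UNIV. L x y) = 0)"

definition reversible :: "(('n::finite \<Rightarrow> bool) \<Rightarrow> real) \<Rightarrow> (('n \<Rightarrow> bool) \<Rightarrow> ('n \<Rightarrow> bool) \<Rightarrow> real) \<Rightarrow> bool" where
  "reversible \<pi> L \<longleftrightarrow> (\<forall>x y. \<pi> x * L x y = \<pi> y * L y x)"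

definition flip_swap :: "(('n::finite \<Rightarrow> bool) \<Rightarrow> ('n \<Rightarrow> bool) \<Rightarrow> real) \<Rightarrow> bool" where
  "flip_swap L \<longleftrightarrow> (\<forall>x y. x \<noteq> y \<and> L x y > 0 \<longrightarrow>
      (\<exists>i. y = x(i := \<not> x i)) \<or> (\<exists>i j. x i \<noteq> x j \<and> y = x(i := x j, j := x i)))"

definition expect :: "(('n::finite \<Rightarrow> bool) \<Rightarrow> real) \<Rightarrow> (('n \<Rightarrow> bool) \<Rightarrow> real) \<Rightarrow> real" where
  "expect \<pi> g = (\<Sum>x\<in>UNIV. \<pi> x * g x)"

definition apply_gen :: "(('n::finite \<Rightarrow> bool) \<Rightarrow> ('n \<Rightarrow> bool) \<Rightarrow> real) \<Rightarrow> (('n \<Rightarrow> bool) \<Rightarrow> real) \<Rightarrow> ('n \<Rightarrow> bool) \<Rightarrow> real" where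
  "apply_gen L g x = (\<Sum>y\<in>UNIV. L x y * g y)"

definition dirichlet :: "(('n::finite \<Rightarrow> bool) \<Rightarrow> real) \<Rightarrow> (('n \<Rightarrow> bool) \<Rightarrow> ('n \<Rightarrow> bool) \<Rightarrow> real)
    \<Rightarrow> (('n \<Rightarrow> bool) \<Rightarrow> real) \<Rightarrow> (('n \<Rightarrow> bool) \<Rightarrow> real) \<Rightarrow> real" where
  "dirichlet \<pi> L f g = - (\<Sum>x\<in>UNIV. \<pi> x * f x * apply_gen L g x)"

definition Ent :: "(('n::finite \<Rightarrow> bool) \<Rightarrow> real) \<Rightarrow> (('n \<Rightarrow> bool) \<Rightarrow> real) \<Rightarrow> real" where
  "Ent \<pi> f = expect \<pi> (\<lambda>x. f x * ln (f x)) - expect \<pi> f * ln (expect \<pi> f)"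

definition mlsi :: "(('n::finite \<Rightarrow> bool) \<Rightarrow> real) \<Rightarrow> (('n \<Rightarrow> bool) \<Rightarrow> ('n \<Rightarrow> bool) \<Rightarrow> real) \<Rightarrow> real \<Rightarrow> bool" where
  "mlsi \<pi> L c \<longleftrightarrow> (\<forall>f. (\<forall>x. f x > 0) \<and> \<not> (\<exists>a. \<forall>x. f x = a)
      \<longrightarrow> c * Ent \<pi> f \<le> dirichlet \<pi> L f (\<lambda>x. ln (f x)))"

definition rho :: "(('n::finite \<Rightarrow> bool) \<Rightarrow> real) \<Rightarrow> (('n \<Rightarrow> bool) \<Rightarrow> ('n \<Rightarrow> bool) \<Rightarrow> real) \<Rightarrow> real" where
  "rho \<pi> L = Sup {c. mlsi \<pi> L c}"

definition R_stable :: "real \<Rightarrow> (('n::finite \<Rightarrow> bool) \<Rightarrow> real) \<Rightarrow> (('n \<Rightarrow> bool) \<Rightarrow> ('n \<Rightarrow> bool) \<Rightarrow> real) \<Rightarrow> bool" where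
  "R_stable R \<pi> L \<longleftrightarrow> rho \<pi> L > 0 \<and>
     (\<forall>x i. \<pi> x > 0 \<longrightarrow> (\<Sum>y\<in>{y. y i \<noteq> x i}. L x y) \<le> R * rho \<pi> L)"

definition d_alpha :: "('n::finite \<Rightarrow> real) \<Rightarrow> ('n \<Rightarrow> bool) \<Rightarrow> ('n \<Rightarrow> bool) \<Rightarrow> real" where
  "d_alpha \<alpha> x y = (\<Sum>i\<in>UNIV. \<alpha> i * (if x i \<noteq> y i then 1 else 0))"

definition d_alpha_set :: "('n::finite \<Rightarrow> real) \<Rightarrow> ('n \<Rightarrow> bool) \<Rightarrow> ('n \<Rightarrow> bool) set \<Rightarrow> real" where
  "d_alpha_set \<alpha> x A = Min ((\<lambda>y. d_alpha \<alpha> x y) ` A)"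

definition d_T :: "('n::finite \<Rightarrow> bool) \<Rightarrow> ('n \<Rightarrow> bool) set \<Rightarrow> real" where
  "d_T x A = Sup {d_alpha_set \<alpha> x A | \<alpha>. (\<forall>i. \<alpha> i \<ge> 0) \<and> sqrt (\<Sum>i\<in>UNIV. (\<alpha> i)\<^sup>2) \<le> 1}"

end

theory Submission
  imports Defs "HOL-Analysis.Analysis"
begin
definition feas :: "('n::finite \<Rightarrow> real) \<Rightarrow> bool" where
  "feas \<alpha> \<longleftrightarrow> (\<forall>i. \<alpha> i \<ge> 0) \<and> sqrt (\<Sum>i\<in>UNIV. (\<alpha> i)\<^sup>2) \<le> 1"

lemma feas_le1: "feas \<alpha> \<Longrightarrow> \<alpha> i \<le> 1"
proof -
  assume f: "feas \<alpha>"
  have "(\<alpha> i)\<^sup>2 \<le> (\<Sum>j\<in>UNIV. (\<alpha> j)\<^sup>2)"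
    by (rule member_le_sum) auto
  also have "\<dots> \<le> 1" using f unfolding feas_def by (simp add: real_sqrt_le_1_iff)
  finally show ?thesis using f unfolding feas_def
    using abs_square_le_1[of "\<alpha> i"] by simp
qed

lemma feas_sumsq: "feas \<alpha> \<Longrightarrow> (\<Sum>j\<in>UNIV. (\<alpha> j)\<^sup>2) \<le> 1"
  unfolding feas_def by (simp add: real_sqrt_le_1_iff)

lemma dT_set: "d_T x A = Sup ((\<lambda>\<alpha>. d_alpha_set \<alpha> x A) ` {\<alpha>. feas \<alpha>})"
  unfolding d_T_def feas_def by (rule arg_cong[where f=Sup]) auto

lemma d_alpha_nonneg: "(\<forall>i. \<alpha> i \<ge> 0) \<Longrightarrow> d_alpha \<alpha> x y \<ge> 0"
  unfolding d_alpha_def by (intro sum_nonneg) auto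

lemma d_alpha_set_le: "z \<in> A \<Longrightarrow> d_alpha_set \<alpha> x A \<le> d_alpha \<alpha> x z"
  unfolding d_alpha_set_def by (rule Min_le) auto

lemma d_alpha_set_ge: "A \<noteq> {} \<Longrightarrow> (\<And>z. z \<in> A \<Longrightarrow> c \<le> d_alpha \<alpha> x z) \<Longrightarrow> c \<le> d_alpha_set \<alpha> x A"
  unfolding d_alpha_set_def by (subst Min_ge_iff) auto

lemma d_alpha_set_nonneg: "A \<noteq> {} \<Longrightarrow> (\<forall>i. \<alpha> i \<ge> 0) \<Longrightarrow> d_alpha_set \<alpha> x A \<ge> 0"
  by (rule d_alpha_set_ge) (auto intro: d_alpha_nonneg)

lemma d_alpha_set_bound: "A \<noteq> {} \<Longrightarrow> feas (\<alpha>::'n::finite \<Rightarrow> real) \<Longrightarrow> d_alpha_set \<alpha> x A \<le> real CARD('n::finite)"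
proof -
  assume A: "A \<noteq> {}" and f: "feas \<alpha>"
  then obtain z where z: "z \<in> A" by auto
  have "d_alpha_set \<alpha> x A \<le> d_alpha \<alpha> x z" by (rule d_alpha_set_le[OF z])
  also have "\<dots> \<le> (\<Sum>i\<in>(UNIV::'n set). 1)" unfolding d_alpha_def
    by (intro sum_mono) (use feas_le1[OF f] f in \<open>auto simp: feas_def\<close>)
  finally show ?thesis by simp
qed

lemma dT_bdd: "A \<noteq> {} \<Longrightarrow> bdd_above ((\<lambda>\<alpha>. d_alpha_set \<alpha> x A) ` {\<alpha>::'n::finite \<Rightarrow> real. feas \<alpha>})"
  by (rule bdd_aboveI[where M="real CARD('n)"]) (auto intro: d_alpha_set_bound)

lemma feas0: "feas (\<lambda>_. 0)" unfolding feas_def by simp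

lemma dT_ge: "A \<noteq> {} \<Longrightarrow> feas \<alpha> \<Longrightarrow> d_alpha_set \<alpha> x A \<le> d_T x A"
  unfolding dT_set by (rule cSup_upper) (auto intro: dT_bdd)

lemma dT_nonneg: "A \<noteq> {} \<Longrightarrow> d_T x A \<ge> 0"
  using dT_ge[OF _ feas0, of A x] d_alpha_set_nonneg[of A "\<lambda>_. 0" x] by simp

lemma dT_le: "A \<noteq> {} \<Longrightarrow> (\<And>\<alpha>. feas \<alpha> \<Longrightarrow> d_alpha_set \<alpha> x A \<le> c) \<Longrightarrow> d_T x A \<le> c"
  unfolding dT_set by (rule cSup_least) (use feas0 in auto)

lemma dT_zero: "x \<in> A \<Longrightarrow> d_T x A = 0"
proof -
  assume x: "x \<in> A"
  hence A: "A \<noteq> {}" by auto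
  have "d_T x A \<le> 0"
  proof (rule dT_le[OF A])
    fix \<alpha> :: "'a \<Rightarrow> real" assume "feas \<alpha>"
    have "d_alpha_set \<alpha> x A \<le> d_alpha \<alpha> x x" by (rule d_alpha_set_le[OF x])
    also have "\<dots> = 0" unfolding d_alpha_def by simp
    finally show "d_alpha_set \<alpha> x A \<le> 0" .
  qed
  with dT_nonneg[OF A, of x] show ?thesis by simp
qed

lemma dT_approx: "A \<noteq> {} \<Longrightarrow> e > 0 \<Longrightarrow> \<exists>\<alpha>. feas \<alpha> \<and> d_T x A - e < d_alpha_set \<alpha> x A"
proof -
  assume A: "A \<noteq> {}" and e: "e > 0"
  have "d_T x A - e < Sup ((\<lambda>\<alpha>. d_alpha_set \<alpha> x A) ` {\<alpha>. feas \<alpha>})" using e unfolding dT_set by simp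
  then obtain v where "v \<in> (\<lambda>\<alpha>. d_alpha_set \<alpha> x A) ` {\<alpha>. feas \<alpha>}" "d_T x A - e < v"
    using less_cSupE[of "d_T x A - e"] feas0 by blast
  thus ?thesis by auto
qed

lemma d_alpha_triangle:
  assumes "\<forall>i. \<alpha> i \<ge> 0"
  shows "d_alpha \<alpha> x z \<le> d_alpha \<alpha> y z + (\<Sum>i\<in>UNIV. \<alpha> i * (if x i \<noteq> y i then 1 else 0))"
  unfolding d_alpha_def sum.distrib[symmetric]
  by (intro sum_mono) (use assms in \<open>auto simp: algebra_simps\<close>)

lemma d_alpha_set_lip:
  assumes "A \<noteq> {}" "\<forall>i. \<alpha> i \<ge> 0"
  shows "d_alpha_set \<alpha> x A \<le> d_alpha_set \<alpha> y A + (\<Sum>i\<in>UNIV. \<alpha> i * (if x i \<noteq> y i then 1 else 0))"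
proof -
  have "finite ((\<lambda>z. d_alpha \<alpha> y z) ` A)" by simp
  moreover have "(\<lambda>z. d_alpha \<alpha> y z) ` A \<noteq> {}" using assms by simp
  ultimately have "d_alpha_set \<alpha> y A \<in> (\<lambda>z. d_alpha \<alpha> y z) ` A"
    unfolding d_alpha_set_def by (rule Min_in)
  then obtain z where z: "z \<in> A" "d_alpha_set \<alpha> y A = d_alpha \<alpha> y z" by auto
  have "d_alpha_set \<alpha> x A \<le> d_alpha \<alpha> x z" by (rule d_alpha_set_le[OF z(1)])
  also have "\<dots> \<le> d_alpha \<alpha> y z + (\<Sum>i\<in>UNIV. \<alpha> i * (if x i \<noteq> y i then 1 else 0))"
    by (rule d_alpha_triangle[OF assms(2)])
  finally show ?thesis using z(2) by simp
qed

lemma cs2: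
  fixes p q a b s :: real
  assumes "p \<ge> 0" "q \<ge> 0" "a \<ge> 0" "b \<ge> 0" "s \<ge> 0" "p\<^sup>2 + q\<^sup>2 = s\<^sup>2" "a\<^sup>2 + b\<^sup>2 \<le> 1"
  shows "p * b + q * a \<le> s"
proof -
  have e: "(p\<^sup>2 + q\<^sup>2) * (a\<^sup>2 + b\<^sup>2) - (p * b + q * a)\<^sup>2 = (p*a - q*b)\<^sup>2"
    by (simp add: power2_eq_square algebra_simps)
  have "(p * b + q * a)\<^sup>2 \<le> (p\<^sup>2 + q\<^sup>2) * (a\<^sup>2 + b\<^sup>2)"
    using e zero_le_power2[of "p*a - q*b"] by linarith
  also have "\<dots> = s\<^sup>2 * (a\<^sup>2 + b\<^sup>2)" using assms(6) by simp
  also have "\<dots> \<le> s\<^sup>2 * 1" by (rule mult_left_mono[OF assms(7)]) simp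
  finally have "(p * b + q * a)\<^sup>2 \<le> s\<^sup>2" by simp
  thus ?thesis by (rule power2_le_imp_le[OF _ assms(5)])
qed

lemma dT_sq_shift:
  fixes x y :: "'n::finite \<Rightarrow> bool"
  assumes A: "A \<noteq> {}"
  shows "(d_T x A)\<^sup>2 \<le> (d_T y A)\<^sup>2 + real (card {i. x i \<noteq> y i})"
proof -
  define S where "S = {i. x i \<noteq> y i}"
  define k where "k = real (card S)"
  define dy where "dy = d_T y A"
  have k0: "k \<ge> 0" unfolding k_def by simp
  have dy0: "dy \<ge> 0" unfolding dy_def using dT_nonneg[OF A] .
  have main: "d_alpha_set \<alpha> x A \<le> sqrt (dy\<^sup>2 + k)" if f: "feas \<alpha>" for \<alpha> :: "'n \<Rightarrow> real"
  proof -
    define s where "s = d_alpha_set \<alpha> x A"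
    have a0: "\<forall>i. \<alpha> i \<ge> 0" using f unfolding feas_def by auto
    show ?thesis
    proof (cases "s \<le> sqrt k")
      case True
      show ?thesis
      proof -
        have "sqrt k \<le> sqrt (dy\<^sup>2 + k)" by (rule real_sqrt_le_mono) simp
        thus ?thesis using True unfolding s_def by linarith
      qed
    next
      case False
      hence sk: "s > sqrt k" by simp
      have s0: "s \<ge> 0" using sk real_sqrt_ge_zero[OF k0] by linarith
      define a where "a = sqrt (\<Sum>i\<in>S. (\<alpha> i)\<^sup>2)"
      define b where "b = sqrt (\<Sum>i\<in>-S. (\<alpha> i)\<^sup>2)"
      define u where "u = (\<Sum>i\<in>S. \<alpha> i)"
      have aa: "a\<^sup>2 = (\<Sum>i\<in>S. (\<alpha> i)\<^sup>2)" unfolding a_def by (auto intro!: sum_nonneg)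
      have bb: "b\<^sup>2 = (\<Sum>i\<in>-S. (\<alpha> i)\<^sup>2)" unfolding b_def by (auto intro!: sum_nonneg)
      have a_0: "a \<ge> 0" "b \<ge> 0" unfolding a_def b_def by (auto intro!: sum_nonneg)
      have "(\<Sum>i\<in>UNIV. (\<alpha> i)\<^sup>2) = (\<Sum>i\<in>S. (\<alpha> i)\<^sup>2) + (\<Sum>i\<in>-S. (\<alpha> i)\<^sup>2)"
        using sum.Int_Diff[of UNIV "\<lambda>i. (\<alpha> i)\<^sup>2" S] by (simp add: Compl_eq_Diff_UNIV)
      hence ab1: "a\<^sup>2 + b\<^sup>2 \<le> 1" using feas_sumsq[OF f] aa bb by simp
      have u0: "u \<ge> 0" unfolding u_def using a0 by (simp add: sum_nonneg)
      have "u\<^sup>2 \<le> (\<Sum>i\<in>S. (\<alpha> i)\<^sup>2) * card S" unfolding u_def by (rule sum_squared_le_sum_of_squares)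
      also have "\<dots> = (sqrt k * a)\<^sup>2" using k0 aa unfolding k_def by (simp add: power_mult_distrib)
      finally have uka: "u \<le> sqrt k * a" by (rule power2_le_imp_le[OF _ mult_nonneg_nonneg[OF real_sqrt_ge_zero[OF k0] a_0(1)]])
      have split: "d_alpha \<beta> x z = (\<Sum>i\<in>S. \<beta> i * (if x i \<noteq> z i then 1 else 0)) + (\<Sum>i\<in>-S. \<beta> i * (if x i \<noteq> z i then 1 else 0))"
        for \<beta> :: "'n \<Rightarrow> real" and z
        unfolding d_alpha_def
        using sum.Int_Diff[of UNIV "\<lambda>i. \<beta> i * (if x i \<noteq> z i then 1 else 0)" S] by (simp add: Compl_eq_Diff_UNIV)
      have partS: "(\<Sum>i\<in>S. \<alpha> i * (if x i \<noteq> z i then 1 else 0)) \<le> u" for z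
        unfolding u_def by (intro sum_mono) (use a0 in auto)
      have sle: "s \<le> u + (\<Sum>i\<in>-S. \<alpha> i * (if x i \<noteq> z i then 1 else 0))" if z: "z \<in> A" for z
      proof -
        have "s \<le> d_alpha \<alpha> x z" unfolding s_def by (rule d_alpha_set_le[OF z])
        thus ?thesis using split[of \<alpha> z] partS[of z] by linarith
      qed
      show ?thesis
      proof (cases "b = 0")
        case True
        hence "(\<Sum>i\<in>-S. (\<alpha> i)\<^sup>2) = 0" using bb by simp
        hence z: "\<forall>i\<in>-S. \<alpha> i = 0" by (subst (asm) sum_nonneg_eq_0_iff) auto
        obtain z where "z \<in> A" using A by auto
        from sle[OF this] z have "s \<le> u" by simp
        also have "\<dots> \<le> sqrt k"
        proof -
          have "a\<^sup>2 \<le> 1" using ab1 True by simp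
          hence "a \<le> 1" using abs_square_le_1[of a] a_0 by simp
          thus ?thesis using uka mult_left_le[of a "sqrt k"] k0 by simp
        qed
        finally show ?thesis using sk by simp
      next
        case False
        hence bpos: "b > 0" using a_0 by simp
        define \<beta> where "\<beta> i = (if i \<in> S then 0 else \<alpha> i / b)" for i
        have "(\<Sum>i\<in>UNIV. (\<beta> i)\<^sup>2) = (\<Sum>i\<in>S. (\<beta> i)\<^sup>2) + (\<Sum>i\<in>-S. (\<beta> i)\<^sup>2)"
          using sum.Int_Diff[of UNIV "\<lambda>i. (\<beta> i)\<^sup>2" S] by (simp add: Compl_eq_Diff_UNIV)
        also have "\<dots> = (\<Sum>i\<in>-S. (\<alpha> i)\<^sup>2 / b\<^sup>2)" unfolding \<beta>_def
          by (simp add: power_divide)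
        also have "\<dots> = b\<^sup>2 / b\<^sup>2" unfolding bb by (rule sum_divide_distrib[symmetric])
        also have "\<dots> = 1" using bpos by simp
        finally have "(\<Sum>i\<in>UNIV. (\<beta> i)\<^sup>2) = 1" .
        hence fb: "feas \<beta>" unfolding feas_def \<beta>_def using a0 bpos by auto
        have "(s - u) / b \<le> d_alpha_set \<beta> y A"
        proof (rule d_alpha_set_ge[OF A])
          fix z assume z: "z \<in> A"
          have "d_alpha \<beta> y z = (\<Sum>i\<in>-S. \<beta> i * (if y i \<noteq> z i then 1 else 0))"
            unfolding d_alpha_def
            using sum.Int_Diff[of UNIV "\<lambda>i. \<beta> i * (if y i \<noteq> z i then 1 else 0)" S]
            by (simp add: Compl_eq_Diff_UNIV \<beta>_def)
          also have "\<dots> = (\<Sum>i\<in>-S. \<alpha> i * (if x i \<noteq> z i then 1 else 0)) / b"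
            unfolding sum_divide_distrib by (intro sum.cong) (auto simp: \<beta>_def S_def)
          finally show "(s - u) / b \<le> d_alpha \<beta> y z" using sle[OF z] bpos
            by (simp add: divide_right_mono)
        qed
        hence "(s - u) / b \<le> dy" unfolding dy_def using dT_ge[OF A fb, of y] by linarith
        define p where "p = sqrt (s\<^sup>2 - k)"
        have sk2: "s\<^sup>2 \<ge> k" using sk k0 s0
          using power_mono[of "sqrt k" s 2] sk k0 by simp
        have pp: "p\<^sup>2 + (sqrt k)\<^sup>2 = s\<^sup>2" unfolding p_def using sk2 k0 by simp
        have "p * b + sqrt k * a \<le> s" by (rule cs2[OF _ _ _ _ s0 pp ab1]) (simp_all add: p_def a_0 k0 sk2)
        hence "p * b \<le> s - u" using uka by linarith
        hence "p \<le> (s - u) / b" using bpos by (simp add: field_simps)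
        hence pdy: "p \<le> dy" using \<open>(s - u) / b \<le> dy\<close> by linarith
        have "p \<ge> 0" unfolding p_def using sk2 by simp
        hence "p\<^sup>2 \<le> dy\<^sup>2" using pdy by (simp add: power_mono)
        hence "s\<^sup>2 \<le> dy\<^sup>2 + k" using pp k0 by simp
        thus ?thesis unfolding s_def[symmetric] using s0 by (simp add: real_le_rsqrt)
      qed
    qed
  qed
  have "d_T x A \<le> sqrt (dy\<^sup>2 + k)" by (rule dT_le[OF A main])
  hence "(d_T x A)\<^sup>2 \<le> (sqrt (dy\<^sup>2 + k))\<^sup>2" using dT_nonneg[OF A] by (intro power_mono) auto
  thus ?thesis using k0 unfolding dy_def k_def S_def by simp
qed

lemma nb_cases:
  assumes "flip_swap L" "x \<noteq> y" "L x y > 0"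
  shows "(\<exists>i. {k. x k \<noteq> y k} = {i}) \<or> (\<exists>i j. i \<noteq> j \<and> {k. x k \<noteq> y k} = {i, j})"
proof -
  from assms have "(\<exists>i. y = x(i := \<not> x i)) \<or> (\<exists>i j. x i \<noteq> x j \<and> y = x(i := x j, j := x i))"
    unfolding flip_swap_def by blast
  thus ?thesis
  proof
    assume "\<exists>i. y = x(i := \<not> x i)"
    then obtain i where "y = x(i := \<not> x i)" by blast
    hence "{k. x k \<noteq> y k} = {i}" by auto
    thus ?thesis by blast
  next
    assume "\<exists>i j. x i \<noteq> x j \<and> y = x(i := x j, j := x i)"
    then obtain i j where ij: "x i \<noteq> x j" "y = x(i := x j, j := x i)" by blast
    hence "i \<noteq> j" by auto
    moreover have "{k. x k \<noteq> y k} = {i, j}" using ij by auto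
    ultimately show ?thesis by blast
  qed
qed

lemma nb_card: "flip_swap L \<Longrightarrow> x \<noteq> y \<Longrightarrow> L x y > 0 \<Longrightarrow> card {k. x k \<noteq> y k} \<le> 2"
proof -
  assume a: "flip_swap L" "x \<noteq> y" "L x y > 0"
  from nb_cases[of L x y, OF a] show ?thesis
  proof
    assume "\<exists>i. {k. x k \<noteq> y k} = {i}"
    then obtain i where e: "{k. x k \<noteq> y k} = {i}" by blast
    show ?thesis unfolding e by simp
  next
    assume "\<exists>i j. i \<noteq> j \<and> {k. x k \<noteq> y k} = {i, j}"
    then obtain i j where e: "i \<noteq> j" "{k. x k \<noteq> y k} = {i, j}" by blast
    show ?thesis unfolding e(2) using e(1) by simp
  qed
qed

lemma sum_ind: "(\<Sum>k\<in>UNIV. (g::_ \<Rightarrow> real) k * (if (x::'n::finite \<Rightarrow> bool) k \<noteq> y k then 1 else 0)) = sum g {k. x k \<noteq> y k}"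
proof -
  have "(\<Sum>k\<in>UNIV. g k * (if x k \<noteq> y k then 1 else 0)) = (\<Sum>k\<in>UNIV. if k \<in> {k. x k \<noteq> y k} then g k else 0)"
    by (intro sum.cong) auto
  also have "\<dots> = sum g (UNIV \<inter> {k. x k \<noteq> y k})" by (rule sum.inter_restrict[symmetric]) simp
  finally show ?thesis by simp
qed

lemma dd_bound:
  fixes x y :: "'n::finite \<Rightarrow> bool"
  assumes A: "A \<noteq> {}" and f: "feas \<alpha>" and ax: "d_T x A - e < d_alpha_set \<alpha> x A"
    and fs: "flip_swap L" and xy: "x \<noteq> y" and L: "L x y > 0" and e: "0 < e" "e \<le> 1"
    and gt: "d_T x A > d_T y A"
  shows "(d_T x A - d_T y A)\<^sup>2 \<le> 2 * (\<Sum>i\<in>UNIV. (\<alpha> i)\<^sup>2 * (if x i \<noteq> y i then 1 else 0)) + 5 * e"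
proof -
  have a0: "\<forall>i. \<alpha> i \<ge> 0" using f unfolding feas_def by auto
  define u where "u = (\<Sum>i\<in>UNIV. \<alpha> i * (if x i \<noteq> y i then 1 else 0))"
  have "d_alpha_set \<alpha> x A \<le> d_alpha_set \<alpha> y A + u" unfolding u_def by (rule d_alpha_set_lip[OF A a0])
  moreover have "d_alpha_set \<alpha> y A \<le> d_T y A" by (rule dT_ge[OF A f])
  ultimately have lt: "d_T x A - d_T y A \<le> e + u" using ax by linarith
  have u_eq: "u = sum \<alpha> {k. x k \<noteq> y k}" unfolding u_def by (rule sum_ind)
  have s_eq: "(\<Sum>i\<in>UNIV. (\<alpha> i)\<^sup>2 * (if x i \<noteq> y i then 1 else 0)) = (\<Sum>i\<in>{k. x k \<noteq> y k}. (\<alpha> i)\<^sup>2)"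
    by (rule sum_ind)
  have "(d_T x A - d_T y A)\<^sup>2 \<le> (e + u)\<^sup>2" by (rule power_mono[OF lt]) (use gt in simp)
  also have "\<dots> \<le> 2 * (\<Sum>i\<in>{k. x k \<noteq> y k}. (\<alpha> i)\<^sup>2) + 5 * e"
  proof -
    from nb_cases[of L x y, OF fs xy L] show ?thesis
    proof
      assume "\<exists>i. {k. x k \<noteq> y k} = {i}"
      then obtain i where i: "{k. x k \<noteq> y k} = {i}" by blast
      have "\<alpha> i \<le> 1" "\<alpha> i \<ge> 0" using feas_le1[OF f] a0 by auto
      hence h: "e * \<alpha> i \<le> e" "e * e \<le> e" using e by (simp_all add: mult_left_le)
      have q: "(e + sum \<alpha> {i})\<^sup>2 = e * e + 2 * (e * \<alpha> i) + (\<alpha> i)\<^sup>2" by (simp add: power2_eq_square algebra_simps)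
      have r: "(\<Sum>i\<in>{i}. (\<alpha> i)\<^sup>2) = (\<alpha> i)\<^sup>2" by simp
      show ?thesis unfolding u_eq i q r using h e zero_le_power2[of "\<alpha> i"] by linarith
    next
      assume "\<exists>i j. i \<noteq> j \<and> {k. x k \<noteq> y k} = {i, j}"
      then obtain i j where ij: "i \<noteq> j" "{k. x k \<noteq> y k} = {i, j}" by blast
      have "\<alpha> i \<le> 1" "\<alpha> i \<ge> 0" "\<alpha> j \<le> 1" "\<alpha> j \<ge> 0" using feas_le1[OF f] a0 by auto
      hence "e * \<alpha> i \<le> e" "e * \<alpha> j \<le> e" "e * e \<le> e" using e by (simp_all add: mult_left_le)
      moreover have "2 * (\<alpha> i * \<alpha> j) \<le> (\<alpha> i)\<^sup>2 + (\<alpha> j)\<^sup>2"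
        using zero_le_power2[of "\<alpha> i - \<alpha> j"] by (simp add: power2_eq_square algebra_simps)
      moreover have q: "(e + sum \<alpha> {i, j})\<^sup>2 = e * e + 2 * (e * \<alpha> i) + 2 * (e * \<alpha> j) + (\<alpha> i)\<^sup>2 + 2 * (\<alpha> i * \<alpha> j) + (\<alpha> j)\<^sup>2"
        using ij(1) by (simp add: power2_eq_square algebra_simps)
      moreover have r: "(\<Sum>i\<in>{i,j}. (\<alpha> i)\<^sup>2) = (\<alpha> i)\<^sup>2 + (\<alpha> j)\<^sup>2"
        using ij(1) by simp
      ultimately show ?thesis unfolding u_eq ij(2) q r using e by (smt (verit))
    qed
  qed
  finally show ?thesis unfolding s_eq .
qed

lemma sum_coord: "(\<Sum>y\<in>UNIV. L (x::'n::finite \<Rightarrow> bool) y * (if x i \<noteq> y i then 1 else 0)) = (\<Sum>y\<in>{y. y i \<noteq> x i}. (L x y :: real))"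
proof -
  have "(\<Sum>y\<in>UNIV. L x y * (if x i \<noteq> y i then 1 else 0)) = (\<Sum>y\<in>UNIV. if y \<in> {y. y i \<noteq> x i} then L x y else 0)"
    by (intro sum.cong) auto
  also have "\<dots> = sum (L x) (UNIV \<inter> {y. y i \<noteq> x i})" by (rule sum.inter_restrict[symmetric]) simp
  finally show ?thesis by simp
qed

lemma K0:
  fixes x :: "'n::finite \<Rightarrow> bool" and L :: "('n \<Rightarrow> bool) \<Rightarrow> ('n \<Rightarrow> bool) \<Rightarrow> real"
  assumes gen: "generator L" and fs: "flip_swap L" and A: "A \<noteq> {}"
    and cr: "\<And>i. (\<Sum>y\<in>{y. y i \<noteq> x i}. L x y) \<le> r" and r0: "r \<ge> 0"
  shows "(\<Sum>y\<in>UNIV. L x y * (if d_T x A > d_T y A then (d_T x A - d_T y A)\<^sup>2 else 0)) \<le> 2 * r"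
proof -
  define X where "X = (\<Sum>y\<in>UNIV. L x y * (if d_T x A > d_T y A then (d_T x A - d_T y A)\<^sup>2 else 0))"
  define M where "M = (\<Sum>y\<in>UNIV. if y \<noteq> x then L x y else 0)"
  have Lnn: "y \<noteq> x \<Longrightarrow> L x y \<ge> 0" for y using gen unfolding generator_def by auto
  have M0: "M \<ge> 0" unfolding M_def by (intro sum_nonneg) (auto intro: Lnn)
  have key: "X \<le> 2 * r + 5 * e * M" if e: "0 < e" "e \<le> 1" for e
  proof -
    obtain \<alpha> where f: "feas \<alpha>" and ax: "d_T x A - e < d_alpha_set \<alpha> x A"
      using dT_approx[OF A e(1)] by blast
    have a0: "\<forall>i. \<alpha> i \<ge> 0" using f unfolding feas_def by auto
    define S where "S y = (\<Sum>i\<in>UNIV. (\<alpha> i)\<^sup>2 * (if x i \<noteq> y i then 1 else 0))" for y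
    have S0: "S y \<ge> 0" for y unfolding S_def by (intro sum_nonneg) auto
    have tw: "L x y * (if d_T x A > d_T y A then (d_T x A - d_T y A)\<^sup>2 else 0)
        \<le> L x y * (2 * S y) + 5 * e * (if y \<noteq> x then L x y else 0)" for y
    proof (cases "y = x")
      case True
      then show ?thesis unfolding S_def by simp
    next
      case False
      hence L0: "L x y \<ge> 0" by (rule Lnn)
      show ?thesis
      proof (cases "L x y = 0")
        case True then show ?thesis by simp
      next
        case Lne: False
        hence Lp: "L x y > 0" using L0 by simp
        show ?thesis
        proof (cases "d_T x A > d_T y A")
          case gt: True
          have "(d_T x A - d_T y A)\<^sup>2 \<le> 2 * S y + 5 * e"
            unfolding S_def by (rule dd_bound[OF A f ax fs _ Lp e gt]) (use False in auto)
          hence "L x y * (d_T x A - d_T y A)\<^sup>2 \<le> L x y * (2 * S y + 5 * e)"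
            by (rule mult_left_mono[OF _ L0])
          thus ?thesis using gt False by (simp add: algebra_simps)
        next
          case False
          thus ?thesis using L0 S0[of y] e \<open>y \<noteq> x\<close> by simp
        qed
      qed
    qed
    have "X \<le> (\<Sum>y\<in>UNIV. L x y * (2 * S y) + 5 * e * (if y \<noteq> x then L x y else 0))"
      unfolding X_def by (rule sum_mono) (rule tw)
    also have "\<dots> = (\<Sum>y\<in>UNIV. L x y * (2 * S y)) + 5 * e * M"
      unfolding M_def by (simp add: sum.distrib sum_distrib_left)
    also have "(\<Sum>y\<in>UNIV. L x y * (2 * S y)) = (\<Sum>y\<in>UNIV. \<Sum>i\<in>UNIV. 2 * (\<alpha> i)\<^sup>2 * (L x y * (if x i \<noteq> y i then 1 else 0)))"
      unfolding S_def by (simp add: sum_distrib_left mult_ac)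
    also have "\<dots> = (\<Sum>i\<in>UNIV. \<Sum>y\<in>UNIV. 2 * (\<alpha> i)\<^sup>2 * (L x y * (if x i \<noteq> y i then 1 else 0)))"
      by (rule sum.swap)
    also have "\<dots> = (\<Sum>i\<in>UNIV. 2 * (\<alpha> i)\<^sup>2 * (\<Sum>y\<in>UNIV. L x y * (if x i \<noteq> y i then 1 else 0)))"
      by (simp only: sum_distrib_left)
    also have "\<dots> = (\<Sum>i\<in>UNIV. 2 * (\<alpha> i)\<^sup>2 * (\<Sum>y\<in>{y. y i \<noteq> x i}. L x y))"
      by (simp only: sum_coord)
    also have "\<dots> \<le> (\<Sum>i\<in>UNIV. 2 * (\<alpha> i)\<^sup>2 * r)"
      by (intro sum_mono mult_left_mono cr) auto
    also have "\<dots> = 2 * r * (\<Sum>i\<in>UNIV. (\<alpha> i)\<^sup>2)" by (simp add: sum_distrib_left mult_ac)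
    also have "\<dots> \<le> 2 * r * 1" using feas_sumsq[OF f] r0 by (intro mult_left_mono) auto
    finally show ?thesis by simp
  qed
  have "X \<le> 2 * r"
  proof (rule field_le_epsilon)
    fix e :: real assume e: "e > 0"
    define e' where "e' = min 1 (e / (5 * M + 1))"
    have e': "0 < e'" "e' \<le> 1" unfolding e'_def using e M0 by auto
    have "e' \<le> e / (5 * M + 1)" unfolding e'_def by simp
    hence "e' * (5 * M + 1) \<le> e" using M0 by (simp add: field_simps)
    hence "5 * e' * M \<le> e" using e' by (simp add: algebra_simps)
    thus "X \<le> 2 * r + e" using key[OF e'] by linarith
  qed
  thus ?thesis unfolding X_def .
qed

lemma K1:
  fixes x :: "'n::finite \<Rightarrow> bool" and L :: "('n \<Rightarrow> bool) \<Rightarrow> ('n \<Rightarrow> bool) \<Rightarrow> real"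
  assumes gen: "generator L" and fs: "flip_swap L" and A: "A \<noteq> {}"
    and cr: "\<And>i. (\<Sum>y\<in>{y. y i \<noteq> x i}. L x y) \<le> r" and r0: "r \<ge> 0"
  shows "(\<Sum>y\<in>UNIV. L x y * (if (d_T x A)\<^sup>2 > (d_T y A)\<^sup>2 then ((d_T x A)\<^sup>2 - (d_T y A)\<^sup>2)\<^sup>2 else 0))
     \<le> 8 * r * (d_T x A)\<^sup>2"
proof -
  have Lnn: "y \<noteq> x \<Longrightarrow> L x y \<ge> 0" for y using gen unfolding generator_def by auto
  have tw: "L x y * (if (d_T x A)\<^sup>2 > (d_T y A)\<^sup>2 then ((d_T x A)\<^sup>2 - (d_T y A)\<^sup>2)\<^sup>2 else 0)
      \<le> 4 * (d_T x A)\<^sup>2 * (L x y * (if d_T x A > d_T y A then (d_T x A - d_T y A)\<^sup>2 else 0))" for y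
  proof (cases "y = x")
    case True thus ?thesis by simp
  next
    case False
    hence L0: "L x y \<ge> 0" by (rule Lnn)
    define a where "a = d_T x A"
    define b where "b = d_T y A"
    have a0: "a \<ge> 0" and b0: "b \<ge> 0" unfolding a_def b_def using dT_nonneg[OF A] by auto
    have inner: "(if a\<^sup>2 > b\<^sup>2 then (a\<^sup>2 - b\<^sup>2)\<^sup>2 else 0) \<le> 4 * a\<^sup>2 * (if a > b then (a - b)\<^sup>2 else 0)"
    proof (cases "a\<^sup>2 > b\<^sup>2")
      case True
      hence ab: "a > b" using a0 b0 by (meson power_less_imp_less_base)
      have "(a\<^sup>2 - b\<^sup>2)\<^sup>2 = ((a - b) * (a + b))\<^sup>2" by (simp add: power2_eq_square algebra_simps)
      also have "\<dots> = (a - b)\<^sup>2 * (a + b)\<^sup>2" by (simp add: power_mult_distrib)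
      also have "\<dots> \<le> (a - b)\<^sup>2 * (2 * a)\<^sup>2"
        using ab a0 b0 by (intro mult_left_mono power_mono) auto
      also have "\<dots> = 4 * a\<^sup>2 * (a - b)\<^sup>2" by (simp add: power2_eq_square algebra_simps)
      finally show ?thesis using True ab by simp
    next
      case False thus ?thesis using a0 by simp
    qed
    have "L x y * (if a\<^sup>2 > b\<^sup>2 then (a\<^sup>2 - b\<^sup>2)\<^sup>2 else 0) \<le> L x y * (4 * a\<^sup>2 * (if a > b then (a - b)\<^sup>2 else 0))"
      by (rule mult_left_mono[OF inner L0])
    thus ?thesis unfolding a_def b_def by (simp add: mult_ac)
  qed
  have "(\<Sum>y\<in>UNIV. L x y * (if (d_T x A)\<^sup>2 > (d_T y A)\<^sup>2 then ((d_T x A)\<^sup>2 - (d_T y A)\<^sup>2)\<^sup>2 else 0))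
      \<le> (\<Sum>y\<in>UNIV. 4 * (d_T x A)\<^sup>2 * (L x y * (if d_T x A > d_T y A then (d_T x A - d_T y A)\<^sup>2 else 0)))"
    by (rule sum_mono) (rule tw)
  also have "\<dots> = 4 * (d_T x A)\<^sup>2 * (\<Sum>y\<in>UNIV. L x y * (if d_T x A > d_T y A then (d_T x A - d_T y A)\<^sup>2 else 0))"
    by (simp add: sum_distrib_left)
  also have "\<dots> \<le> 4 * (d_T x A)\<^sup>2 * (2 * r)"
    by (rule mult_left_mono[OF K0[OF gen fs A cr r0]]) simp
  finally show ?thesis by (simp add: mult_ac)
qed

lemma Delta2:
  fixes x y :: "'n::finite \<Rightarrow> bool"
  assumes A: "A \<noteq> {}" and fs: "flip_swap L" and xy: "x \<noteq> y" and L: "L x y > 0"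
  shows "(d_T x A)\<^sup>2 - (d_T y A)\<^sup>2 \<le> 2"
  using dT_sq_shift[OF A, of x y] nb_card[of L x y, OF fs xy L] by linarith

lemma apply_gen_shift:
  assumes gen: "generator L"
  shows "apply_gen L G x = (\<Sum>y\<in>UNIV. L x y * (G y - G x))"
proof -
  have "(\<Sum>y\<in>UNIV. L x y * (G y - G x)) = (\<Sum>y\<in>UNIV. L x y * G y) - G x * (\<Sum>y\<in>UNIV. L x y)"
    by (simp add: algebra_simps sum_subtractf sum_distrib_left)
  also have "(\<Sum>y\<in>UNIV. L x y) = 0" using gen unfolding generator_def by auto
  finally show ?thesis unfolding apply_gen_def by simp
qed

lemma dir_sym:
  fixes \<pi> :: "('n::finite \<Rightarrow> bool) \<Rightarrow> real"
  assumes gen: "generator L" and rev: "reversible \<pi> L"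
  shows "2 * dirichlet \<pi> L F G = (\<Sum>x\<in>UNIV. \<Sum>y\<in>UNIV. \<pi> x * L x y * ((F x - F y) * (G x - G y)))"
proof -
  have w: "\<pi> x * L x y = \<pi> y * L y x" for x y using rev unfolding reversible_def by auto
  have P: "dirichlet \<pi> L F G = (\<Sum>x\<in>UNIV. \<Sum>y\<in>UNIV. \<pi> x * L x y * (F x * (G x - G y)))"
  proof -
    have "\<pi> x * F x * apply_gen L G x = - (\<Sum>y\<in>UNIV. \<pi> x * L x y * (F x * (G x - G y)))" for x
      unfolding apply_gen_shift[OF gen] sum_distrib_left sum_negf[symmetric]
      by (intro sum.cong) (auto simp: algebra_simps)
    thus ?thesis unfolding dirichlet_def by (simp add: sum_negf)
  qed
  have Q: "(\<Sum>x\<in>UNIV. \<Sum>y\<in>UNIV. \<pi> x * L x y * (F x * (G x - G y)))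
      = (\<Sum>x\<in>UNIV. \<Sum>y\<in>UNIV. \<pi> x * L x y * (F y * (G y - G x)))"
  proof -
    have "(\<Sum>x\<in>UNIV. \<Sum>y\<in>UNIV. \<pi> x * L x y * (F x * (G x - G y)))
        = (\<Sum>y\<in>UNIV. \<Sum>x\<in>UNIV. \<pi> x * L x y * (F x * (G x - G y)))" by (rule sum.swap)
    also have "\<dots> = (\<Sum>y\<in>UNIV. \<Sum>x\<in>UNIV. \<pi> y * L y x * (F x * (G x - G y)))" by (simp only: w)
    finally show ?thesis by simp
  qed
  have "2 * dirichlet \<pi> L F G = (\<Sum>x\<in>UNIV. \<Sum>y\<in>UNIV. \<pi> x * L x y * (F x * (G x - G y)))
      + (\<Sum>x\<in>UNIV. \<Sum>y\<in>UNIV. \<pi> x * L x y * (F y * (G y - G x)))" using P Q by simp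
  also have "\<dots> = (\<Sum>x\<in>UNIV. \<Sum>y\<in>UNIV. \<pi> x * L x y * ((F x - F y) * (G x - G y)))"
    by (simp add: sum.distrib[symmetric] algebra_simps)
  finally show ?thesis .
qed

lemma dir_log_nonneg:
  fixes \<pi> :: "('n::finite \<Rightarrow> bool) \<Rightarrow> real"
  assumes pi0: "\<forall>x. \<pi> x \<ge> 0" and gen: "generator L" and rev: "reversible \<pi> L" and fpos: "\<forall>x. f x > 0"
  shows "dirichlet \<pi> L f (\<lambda>x. ln (f x)) \<ge> 0"
proof -
  have "0 \<le> (\<Sum>x\<in>UNIV. \<Sum>y\<in>UNIV. \<pi> x * L x y * ((f x - f y) * (ln (f x) - ln (f y))))"
  proof (intro sum_nonneg)
    fix x y
    show "0 \<le> \<pi> x * L x y * ((f x - f y) * (ln (f x) - ln (f y)))"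
    proof (cases "x = y")
      case True thus ?thesis by simp
    next
      case False
      hence "L x y \<ge> 0" using gen unfolding generator_def by auto
      moreover have "(f x - f y) * (ln (f x) - ln (f y)) \<ge> 0"
      proof (cases "f x \<le> f y")
        case True
        hence "ln (f x) \<le> ln (f y)" using fpos by simp
        thus ?thesis using True by (simp add: mult_nonpos_nonpos)
      next
        case False
        hence "ln (f y) \<le> ln (f x)" using fpos by simp
        thus ?thesis using False by simp
      qed
      ultimately show ?thesis using pi0 by simp
    qed
  qed
  thus ?thesis using dir_sym[OF gen rev, of f "\<lambda>x. ln (f x)"] by simp
qed

lemma expect_const: "(\<Sum>x\<in>UNIV. \<pi> x) = 1 \<Longrightarrow> expect \<pi> (\<lambda>_. a) = a"
  unfolding expect_def by (simp add: sum_distrib_right[symmetric])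

lemma mlsi_rho:
  fixes \<pi> :: "('n::finite \<Rightarrow> bool) \<Rightarrow> real"
  assumes pi0: "\<forall>x. \<pi> x \<ge> 0" and pi1: "(\<Sum>x\<in>UNIV. \<pi> x) = 1"
    and gen: "generator L" and rev: "reversible \<pi> L" and rp: "rho \<pi> L > 0"
    and fpos: "\<forall>x. f x > 0"
  shows "rho \<pi> L * Ent \<pi> f \<le> dirichlet \<pi> L f (\<lambda>x. ln (f x))"
proof -
  define D where "D = dirichlet \<pi> L f (\<lambda>x. ln (f x))"
  have D0: "D \<ge> 0" unfolding D_def by (rule dir_log_nonneg[OF pi0 gen rev fpos])
  show ?thesis
  proof (cases "\<exists>a. \<forall>x. f x = a")
    case True
    then obtain a where "\<forall>x. f x = a" by blast
    hence "f = (\<lambda>_. a)" by auto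
    hence "Ent \<pi> f = 0" unfolding Ent_def using expect_const[OF pi1] by simp
    thus ?thesis using D0 unfolding D_def by simp
  next
    case nc: False
    have inC: "c * Ent \<pi> f \<le> D" if "mlsi \<pi> L c" for c
      using that fpos nc unfolding mlsi_def D_def by blast
    show ?thesis
    proof (cases "Ent \<pi> f > 0")
      case False
      hence "rho \<pi> L * Ent \<pi> f \<le> 0" using rp by (simp add: mult_nonneg_nonpos)
      thus ?thesis using D0 unfolding D_def by linarith
    next
      case Epos: True
      have m0: "mlsi \<pi> L 0" unfolding mlsi_def using dir_log_nonneg[OF pi0 gen rev] by auto
      show ?thesis
      proof (cases "bdd_above {c. mlsi \<pi> L c}")
        case True
        have "rho \<pi> L \<le> D / Ent \<pi> f" unfolding rho_def
        proof (rule cSup_least)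
          show "{c. mlsi \<pi> L c} \<noteq> {}" using m0 by auto
          fix c assume "c \<in> {c. mlsi \<pi> L c}"
          hence "c * Ent \<pi> f \<le> D" using inC by auto
          thus "c \<le> D / Ent \<pi> f" using Epos by (simp add: field_simps)
        qed
        thus ?thesis using Epos unfolding D_def by (simp add: field_simps)
      next
        case False
        then obtain c where c: "mlsi \<pi> L c" "c > rho \<pi> L"
          unfolding bdd_above_def by (metis mem_Collect_eq not_le)
        have "rho \<pi> L * Ent \<pi> f \<le> c * Ent \<pi> f" using c(2) Epos by (intro mult_right_mono) auto
        also have "\<dots> \<le> D" by (rule inC[OF c(1)])
        finally show ?thesis unfolding D_def .
      qed
    qed
  qed
qed

definition Hf :: "(('n::finite \<Rightarrow> bool) \<Rightarrow> real) \<Rightarrow> (('n \<Rightarrow> bool) \<Rightarrow> real) \<Rightarrow> real \<Rightarrow> real" where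
  "Hf \<pi> f t = (\<Sum>x\<in>UNIV. \<pi> x * exp (t * f x))"

definition dHf :: "(('n::finite \<Rightarrow> bool) \<Rightarrow> real) \<Rightarrow> (('n \<Rightarrow> bool) \<Rightarrow> real) \<Rightarrow> real \<Rightarrow> real" where
  "dHf \<pi> f t = (\<Sum>x\<in>UNIV. \<pi> x * f x * exp (t * f x))"

lemma Ent_exp: "Ent \<pi> (\<lambda>x. exp (t * f x)) = t * dHf \<pi> f t - Hf \<pi> f t * ln (Hf \<pi> f t)"
  unfolding Ent_def expect_def Hf_def dHf_def by (simp add: sum_distrib_left mult_ac)

lemma dir_bound:
  fixes \<pi> :: "('n::finite \<Rightarrow> bool) \<Rightarrow> real" and f :: "('n \<Rightarrow> bool) \<Rightarrow> real"
  assumes pi0: "\<forall>x. \<pi> x \<ge> 0" and gen: "generator L" and rev: "reversible \<pi> L"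
    and B0: "\<And>x y. B x y \<ge> 0" and Bd: "\<And>x. B x x = 0"
    and TB: "\<And>x y. x \<noteq> y \<Longrightarrow> \<pi> x > 0 \<Longrightarrow> L x y > 0 \<Longrightarrow> f x > f y \<Longrightarrow>
        (exp (t * f x) - exp (t * f y)) * (t * f x - t * f y) \<le> B x y"
  shows "dirichlet \<pi> L (\<lambda>x. exp (t * f x)) (\<lambda>x. t * f x) \<le> (\<Sum>x\<in>UNIV. \<pi> x * (\<Sum>y\<in>UNIV. L x y * B x y))"
proof -
  have w: "\<pi> x * L x y = \<pi> y * L y x" for x y using rev unfolding reversible_def by auto
  define T where "T x y = (exp (t * f x) - exp (t * f y)) * (t * f x - t * f y)" for x y
  have Tsym: "T x y = T y x" for x y unfolding T_def by (simp add: algebra_simps)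
  have tw: "\<pi> x * L x y * T x y \<le> \<pi> x * L x y * (B x y + B y x)" for x y
  proof (cases "x = y")
    case True thus ?thesis unfolding T_def by (simp add: Bd)
  next
    case xy: False
    have L0: "L x y \<ge> 0" using gen xy unfolding generator_def by auto
    have L0': "L y x \<ge> 0" using gen xy unfolding generator_def by auto
    have w0: "\<pi> x * L x y \<ge> 0" using pi0 L0 by simp
    show ?thesis
    proof (cases "\<pi> x * L x y = 0")
      case True
      show ?thesis unfolding True by simp
    next
      case False
      hence wp: "\<pi> x * L x y > 0" using w0 by linarith
      hence px: "\<pi> x > 0" "L x y > 0" using pi0 L0
        by (metis less_eq_real_def mult_zero_left mult_zero_right)+
      have "\<pi> y * L y x > 0" using wp w by simp
      hence py: "\<pi> y > 0" "L y x > 0" using pi0 L0'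
        by (metis less_eq_real_def mult_zero_left mult_zero_right)+
      have "T x y \<le> B x y + B y x"
      proof (cases "f x > f y")
        case True
        have "T x y \<le> B x y" unfolding T_def by (rule TB[OF xy px True])
        thus ?thesis using B0[of y x] by linarith
      next
        case False
        show ?thesis
        proof (cases "f y > f x")
          case True
          have "T y x \<le> B y x" unfolding T_def by (rule TB[OF _ py True]) (use xy in auto)
          thus ?thesis using B0[of x y] Tsym[of x y] by linarith
        next
          case False
          hence "f x = f y" using \<open>\<not> f x > f y\<close> by simp
          hence "T x y = 0" unfolding T_def by simp
          thus ?thesis using B0[of x y] B0[of y x] by linarith
        qed
      qed
      thus ?thesis by (rule mult_left_mono[OF _ w0])
    qed
  qed
  have "2 * dirichlet \<pi> L (\<lambda>x. exp (t * f x)) (\<lambda>x. t * f x) = (\<Sum>x\<in>UNIV. \<Sum>y\<in>UNIV. \<pi> x * L x y * T x y)"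
    unfolding dir_sym[OF gen rev] T_def ..
  also have "\<dots> \<le> (\<Sum>x\<in>UNIV. \<Sum>y\<in>UNIV. \<pi> x * L x y * (B x y + B y x))"
    by (intro sum_mono tw)
  also have "\<dots> = (\<Sum>x\<in>UNIV. \<Sum>y\<in>UNIV. \<pi> x * L x y * B x y) + (\<Sum>x\<in>UNIV. \<Sum>y\<in>UNIV. \<pi> x * L x y * B y x)"
    by (simp add: algebra_simps sum.distrib)
  also have "(\<Sum>x\<in>UNIV. \<Sum>y\<in>UNIV. \<pi> x * L x y * B y x) = (\<Sum>x\<in>UNIV. \<Sum>y\<in>UNIV. \<pi> y * L y x * B y x)"
    by (simp only: w)
  also have "\<dots> = (\<Sum>y\<in>UNIV. \<Sum>x\<in>UNIV. \<pi> y * L y x * B y x)" by (rule sum.swap)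
  finally have "2 * dirichlet \<pi> L (\<lambda>x. exp (t * f x)) (\<lambda>x. t * f x) \<le> 2 * (\<Sum>x\<in>UNIV. \<Sum>y\<in>UNIV. \<pi> x * L x y * B x y)"
    by simp
  hence "dirichlet \<pi> L (\<lambda>x. exp (t * f x)) (\<lambda>x. t * f x) \<le> (\<Sum>x\<in>UNIV. \<Sum>y\<in>UNIV. \<pi> x * L x y * B x y)"
    by linarith
  also have "\<dots> = (\<Sum>x\<in>UNIV. \<pi> x * (\<Sum>y\<in>UNIV. L x y * B x y))"
    by (simp add: sum_distrib_left mult_ac)
  finally show ?thesis .
qed

lemma ent_bound:
  fixes \<pi> :: "('n::finite \<Rightarrow> bool) \<Rightarrow> real" and L :: "('n \<Rightarrow> bool) \<Rightarrow> ('n \<Rightarrow> bool) \<Rightarrow> real"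
  assumes pi0: "\<forall>x. \<pi> x \<ge> 0" and pi1: "(\<Sum>x\<in>UNIV. \<pi> x) = 1"
    and gen: "generator L" and rev: "reversible \<pi> L" and fs: "flip_swap L"
    and rp: "rho \<pi> L > 0" and A: "A \<noteq> {}"
    and cr: "\<And>x i. \<pi> x > 0 \<Longrightarrow> (\<Sum>y\<in>{y. y i \<noteq> x i}. L x y) \<le> R * rho \<pi> L" and R0: "R \<ge> 0"
    and c0: "c \<ge> 0"
    and TB: "\<And>x y. x \<noteq> y \<Longrightarrow> L x y > 0 \<Longrightarrow> (d_T x A)\<^sup>2 > (d_T y A)\<^sup>2 \<Longrightarrow>
        (exp (t * (d_T x A)\<^sup>2) - exp (t * (d_T y A)\<^sup>2)) * (t * (d_T x A)\<^sup>2 - t * (d_T y A)\<^sup>2)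
          \<le> c * t\<^sup>2 * exp (t * (d_T x A)\<^sup>2) * ((d_T x A)\<^sup>2 - (d_T y A)\<^sup>2)\<^sup>2"
  shows "t * dHf \<pi> (\<lambda>x. (d_T x A)\<^sup>2) t - Hf \<pi> (\<lambda>x. (d_T x A)\<^sup>2) t * ln (Hf \<pi> (\<lambda>x. (d_T x A)\<^sup>2) t)
      \<le> 8 * c * R * t\<^sup>2 * dHf \<pi> (\<lambda>x. (d_T x A)\<^sup>2) t"
proof -
  define f where "f x = (d_T x A)\<^sup>2" for x
  define \<rho> where "\<rho> = rho \<pi> L"
  define B where "B x y = (if f x > f y then c * t\<^sup>2 * exp (t * f x) * (f x - f y)\<^sup>2 else 0)" for x y
  have B0: "B x y \<ge> 0" for x y unfolding B_def using c0 by auto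
  have Bd: "B x x = 0" for x unfolding B_def by simp
  have "\<rho> * Ent \<pi> (\<lambda>x. exp (t * f x)) \<le> dirichlet \<pi> L (\<lambda>x. exp (t * f x)) (\<lambda>x. ln (exp (t * f x)))"
    unfolding \<rho>_def by (rule mlsi_rho[OF pi0 pi1 gen rev rp]) simp
  also have "\<dots> = dirichlet \<pi> L (\<lambda>x. exp (t * f x)) (\<lambda>x. t * f x)" by simp
  also have "\<dots> \<le> (\<Sum>x\<in>UNIV. \<pi> x * (\<Sum>y\<in>UNIV. L x y * B x y))"
    by (rule dir_bound[OF pi0 gen rev B0 Bd]) (unfold B_def f_def, use TB in auto)
  also have "\<dots> \<le> (\<Sum>x\<in>UNIV. \<pi> x * (c * t\<^sup>2 * exp (t * f x) * (8 * (R * \<rho>) * f x)))"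
  proof (rule sum_mono)
    fix x
    show "\<pi> x * (\<Sum>y\<in>UNIV. L x y * B x y) \<le> \<pi> x * (c * t\<^sup>2 * exp (t * f x) * (8 * (R * \<rho>) * f x))"
    proof (cases "\<pi> x > 0")
      case False
      hence "\<pi> x = 0" using pi0[rule_format, of x] by linarith
      thus ?thesis by simp
    next
      case True
      have "(\<Sum>y\<in>UNIV. L x y * B x y)
          = c * t\<^sup>2 * exp (t * f x) * (\<Sum>y\<in>UNIV. L x y * (if f x > f y then (f x - f y)\<^sup>2 else 0))"
        unfolding B_def sum_distrib_left by (intro sum.cong) auto
      also have "\<dots> \<le> c * t\<^sup>2 * exp (t * f x) * (8 * (R * \<rho>) * f x)"
        unfolding f_def \<rho>_def
        by (rule mult_left_mono[OF K1[OF gen fs A cr[OF True]]]) (use c0 R0 rp in \<open>auto simp: \<rho>_def\<close>)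
      finally show ?thesis using True by (intro mult_left_mono) auto
    qed
  qed
  also have "\<dots> = \<rho> * (8 * c * R * t\<^sup>2 * dHf \<pi> f t)"
    unfolding dHf_def by (simp add: sum_distrib_left mult_ac)
  finally have "\<rho> * Ent \<pi> (\<lambda>x. exp (t * f x)) \<le> \<rho> * (8 * c * R * t\<^sup>2 * dHf \<pi> f t)" .
  hence "Ent \<pi> (\<lambda>x. exp (t * f x)) \<le> 8 * c * R * t\<^sup>2 * dHf \<pi> f t"
    using rp unfolding \<rho>_def by simp
  thus ?thesis unfolding Ent_exp f_def .
qed

lemma herbst_deriv:
  fixes H dH :: "real \<Rightarrow> real"
  assumes Hp: "\<And>t. H t > 0" and D: "\<And>t. (H has_real_derivative dH t) (at t)" and t0: "t \<noteq> 0"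
  shows "((\<lambda>t. ln (H t) / t - c * ln (H t)) has_real_derivative
           ((dH t / H t) * t - ln (H t)) / (t * t) - c * (dH t / H t)) (at t)"
proof -
  have l: "((\<lambda>t. ln (H t)) has_real_derivative dH t / H t) (at t)"
    using DERIV_chain'[OF D DERIV_ln_divide[OF Hp]] by (simp add: field_simps)
  have "((\<lambda>t. ln (H t) / t) has_real_derivative ((dH t / H t) * t - ln (H t) * 1) / (t * t)) (at t)"
    by (rule DERIV_divide[OF l DERIV_ident t0])
  from DERIV_diff[OF this DERIV_cmult[OF l, of c]] show ?thesis by simp
qed

lemma herbst_deriv_sign:
  fixes H dH :: "real \<Rightarrow> real"
  assumes Hp: "H t > 0" and t0: "t \<noteq> 0" and hyp: "t * dH t - H t * ln (H t) \<le> c * t\<^sup>2 * dH t"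
  shows "((dH t / H t) * t - ln (H t)) / (t * t) - c * (dH t / H t) \<le> 0"
proof -
  have tt: "t * t > 0" using t0 by (metis not_real_square_gt_zero)
  have "((dH t / H t) * t - ln (H t)) / (t * t) = (t * dH t - H t * ln (H t)) / (H t * (t * t))"
    using Hp t0 by (simp add: field_simps)
  also have "\<dots> \<le> (c * t\<^sup>2 * dH t) / (H t * (t * t))"
    by (rule divide_right_mono[OF hyp]) (use Hp tt in simp)
  also have "\<dots> = c * (dH t / H t)" using Hp t0 by (simp add: field_simps power2_eq_square)
  finally show ?thesis by simp
qed

lemma herbst_lim:
  fixes H dH :: "real \<Rightarrow> real"
  assumes Hp: "\<And>t. H t > 0" and D: "\<And>t. (H has_real_derivative dH t) (at t)" and H0: "H 0 = 1"
  shows "((\<lambda>t. ln (H t) / t - c * ln (H t)) \<longlongrightarrow> dH 0) (at 0)"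
proof -
  have l: "((\<lambda>t. ln (H t)) has_real_derivative dH 0 / H 0) (at 0)"
    using DERIV_chain'[OF D DERIV_ln_divide[OF Hp]] by (simp add: field_simps)
  hence "((\<lambda>y. (ln (H y) - ln (H 0)) / (y - 0)) \<longlongrightarrow> dH 0 / H 0) (at 0)"
    unfolding has_field_derivative_iff .
  hence a: "((\<lambda>y. ln (H y) / y) \<longlongrightarrow> dH 0) (at 0)" using H0 by simp
  have "isCont (\<lambda>t. ln (H t)) 0" by (rule DERIV_isCont[OF l])
  hence "((\<lambda>t. ln (H t)) \<longlongrightarrow> 0) (at 0)" using H0 unfolding isCont_def by simp
  hence b: "((\<lambda>t. c * ln (H t)) \<longlongrightarrow> 0) (at 0)" using tendsto_mult_left[of _ 0 _ c] by fastforce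
  from tendsto_diff[OF a b] show ?thesis by simp
qed

lemma herbst_up:
  fixes H dH :: "real \<Rightarrow> real"
  assumes Hp: "\<And>t. H t > 0" and D: "\<And>t. (H has_real_derivative dH t) (at t)" and H0: "H 0 = 1"
    and lam: "lam > 0"
    and hyp: "\<And>t. 0 < t \<Longrightarrow> t \<le> lam \<Longrightarrow> t * dH t - H t * ln (H t) \<le> c * t\<^sup>2 * dH t"
  shows "ln (H lam) / lam - c * ln (H lam) \<le> dH 0"
proof -
  define \<Phi> where "\<Phi> t = ln (H t) / t - c * ln (H t)" for t
  have mono: "\<Phi> lam \<le> \<Phi> e" if e: "0 < e" "e \<le> lam" for e
    unfolding \<Phi>_def
  proof (rule DERIV_nonpos_imp_nonincreasing[OF e(2)])
    fix t assume t: "e \<le> t" "t \<le> lam"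
    hence t0: "t \<noteq> 0" "t > 0" using e by auto
    show "\<exists>y. ((\<lambda>t. ln (H t) / t - c * ln (H t)) has_real_derivative y) (at t) \<and> y \<le> 0"
      using herbst_deriv[OF Hp D t0(1)] herbst_deriv_sign[of H t dH c, OF Hp t0(1) hyp[OF t0(2) t(2)]] by blast
  qed
  have lim: "(\<Phi> \<longlongrightarrow> dH 0) (at_right 0)"
    unfolding \<Phi>_def by (rule tendsto_mono[OF at_le herbst_lim[OF Hp D H0]]) simp
  have ev: "eventually (\<lambda>e. \<Phi> lam \<le> \<Phi> e) (at_right 0)"
    using eventually_at_right_real[OF lam] by eventually_elim (auto intro: mono)
  have "\<Phi> lam \<le> dH 0" by (rule tendsto_lowerbound[OF lim ev]) simp
  thus ?thesis unfolding \<Phi>_def .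
qed

lemma herbst_down:
  fixes H dH :: "real \<Rightarrow> real"
  assumes Hp: "\<And>t. H t > 0" and D: "\<And>t. (H has_real_derivative dH t) (at t)" and H0: "H 0 = 1"
    and s: "s < 0"
    and hyp: "\<And>t. s \<le> t \<Longrightarrow> t < 0 \<Longrightarrow> t * dH t - H t * ln (H t) \<le> c * t\<^sup>2 * dH t"
  shows "ln (H s) / s - c * ln (H s) \<ge> dH 0"
proof -
  define \<Phi> where "\<Phi> t = ln (H t) / t - c * ln (H t)" for t
  have mono: "\<Phi> e \<le> \<Phi> s" if e: "s \<le> e" "e < 0" for e
    unfolding \<Phi>_def
  proof (rule DERIV_nonpos_imp_nonincreasing[OF e(1)])
    fix t assume t: "s \<le> t" "t \<le> e"
    hence t0: "t \<noteq> 0" "t < 0" using e by auto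
    show "\<exists>y. ((\<lambda>t. ln (H t) / t - c * ln (H t)) has_real_derivative y) (at t) \<and> y \<le> 0"
      using herbst_deriv[OF Hp D t0(1)] herbst_deriv_sign[of H t dH c, OF Hp t0(1) hyp[OF t(1) t0(2)]] by blast
  qed
  have lim: "(\<Phi> \<longlongrightarrow> dH 0) (at_left 0)"
    unfolding \<Phi>_def by (rule tendsto_mono[OF at_le herbst_lim[OF Hp D H0]]) simp
  have ev: "eventually (\<lambda>e. \<Phi> e \<le> \<Phi> s) (at_left 0)"
    using eventually_at_left_real[OF s] by eventually_elim (auto intro: mono)
  have "dH 0 \<le> \<Phi> s" by (rule tendsto_upperbound[OF lim ev]) simp
  thus ?thesis unfolding \<Phi>_def .
qed

lemma T_up_real:
  fixes t u v :: real
  assumes t: "t > 0" and uv: "u > v"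
  shows "(exp (t * u) - exp (t * v)) * (t * u - t * v) \<le> 1 * t\<^sup>2 * exp (t * u) * (u - v)\<^sup>2"
proof -
  define d where "d = t * u - t * v"
  have d0: "d \<ge> 0" unfolding d_def using t uv by (simp add: algebra_simps)
  have "exp (t * v) = exp (t * u) * exp (- d)" unfolding d_def by (simp add: exp_add[symmetric])
  also have "\<dots> \<ge> exp (t * u) * (1 + - d)" by (rule mult_left_mono) (use exp_ge_add_one_self[of "- d"] in auto)
  finally have "exp (t * u) - exp (t * v) \<le> exp (t * u) * d" by (simp add: algebra_simps)
  hence "(exp (t * u) - exp (t * v)) * d \<le> exp (t * u) * d * d" by (rule mult_right_mono[OF _ d0])
  also have "exp (t * u) * d * d = 1 * t\<^sup>2 * exp (t * u) * (u - v)\<^sup>2"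
    unfolding d_def by (simp add: power2_eq_square algebra_simps)
  finally show ?thesis unfolding d_def .
qed

lemma T_down_real:
  fixes t u v :: real
  assumes t: "- (1/2) \<le> t" "t < 0" and uv: "u > v" "u - v \<le> 2"
  shows "(exp (t * u) - exp (t * v)) * (t * u - t * v) \<le> 2 * t\<^sup>2 * exp (t * u) * (u - v)\<^sup>2"
proof -
  define d where "d = t * v - t * u"
  have dd: "d = (- t) * (u - v)" unfolding d_def by (simp add: algebra_simps)
  have d0: "d \<ge> 0" unfolding dd by (rule mult_nonneg_nonneg) (use t uv in auto)
  have "(- t) * (u - v) \<le> (1/2) * 2" using t uv by (intro mult_mono) auto
  hence d1: "d \<le> 1" unfolding dd by simp
  have "exp (t * v) = exp (t * u) * exp d" unfolding d_def by (simp add: exp_add[symmetric])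
  also have "\<dots> \<le> exp (t * u) * (1 + d + d\<^sup>2)" by (rule mult_left_mono[OF exp_bound[OF d0 d1]]) simp
  also have "\<dots> \<le> exp (t * u) * (1 + 2 * d)"
  proof -
    have "d\<^sup>2 \<le> d" using d0 d1 by (simp add: power2_eq_square mult_left_le)
    thus ?thesis by (intro mult_left_mono) auto
  qed
  finally have "exp (t * v) - exp (t * u) \<le> 2 * d * exp (t * u)" by (simp add: algebra_simps)
  hence "(exp (t * v) - exp (t * u)) * d \<le> 2 * d * exp (t * u) * d" by (rule mult_right_mono[OF _ d0])
  also have "2 * d * exp (t * u) * d = 2 * t\<^sup>2 * exp (t * u) * (u - v)\<^sup>2"
    unfolding dd by (simp add: power2_eq_square algebra_simps)
  also have "(exp (t * v) - exp (t * u)) * d = (exp (t * u) - exp (t * v)) * (t * u - t * v)"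
    unfolding d_def by (simp add: algebra_simps)
  finally show ?thesis .
qed

theorem proposition4p10:
  fixes \<pi> :: "('n::finite \<Rightarrow> bool) \<Rightarrow> real"
    and L :: "('n \<Rightarrow> bool) \<Rightarrow> ('n \<Rightarrow> bool) \<Rightarrow> real"
    and R :: real
    and A :: "('n \<Rightarrow> bool) set"
  assumes "\<forall>x. \<pi> x \<ge> 0" and "(\<Sum>x\<in>UNIV. \<pi> x) = 1"
    and "generator L" and "reversible \<pi> L" and "flip_swap L"
    and "R \<ge> 0" and "R_stable R \<pi> L"
    and "A \<noteq> {}"
  shows "(\<Sum>x\<in>A. \<pi> x) * expect \<pi> (\<lambda>x. exp ((d_T x A)\<^sup>2 / (40 * R + 4))) \<le> 1"
proof -
  note pi0 = assms(1) and pi1 = assms(2) and gen = assms(3) and rev = assms(4) and fs = assms(5)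
    and R0 = assms(6) and st = assms(7) and A = assms(8)
  have rp: "rho \<pi> L > 0" using st unfolding R_stable_def by blast
  have cr: "\<And>x i. \<pi> x > 0 \<Longrightarrow> (\<Sum>y\<in>{y. y i \<noteq> x i}. L x y) \<le> R * rho \<pi> L"
    using st unfolding R_stable_def by blast
  define f where "f x = (d_T x A)\<^sup>2" for x
  define H where "H = Hf \<pi> f"
  define dH where "dH = dHf \<pi> f"
  have f0: "f x \<ge> 0" for x unfolding f_def by simp
  obtain x0 where x0: "\<pi> x0 > 0"
  proof -
    have "\<exists>x. \<pi> x > 0"
    proof (rule ccontr)
      assume "\<not> (\<exists>x. \<pi> x > 0)"
      hence "\<forall>x. \<pi> x = 0" using pi0 by (metis less_eq_real_def)
      thus False using pi1 by simp
    qed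
    thus ?thesis using that by blast
  qed
  have Hp: "H t > 0" for t
  proof -
    have "\<pi> x0 * exp (t * f x0) \<le> (\<Sum>x\<in>UNIV. \<pi> x * exp (t * f x))"
      by (rule member_le_sum) (use pi0 in auto)
    moreover have "\<pi> x0 * exp (t * f x0) > 0" using x0 by simp
    ultimately show ?thesis unfolding H_def Hf_def by linarith
  qed
  have H0: "H 0 = 1" unfolding H_def Hf_def using pi1 by simp
  have D: "(H has_real_derivative dH t) (at t)" for t
  proof -
    have "((\<lambda>t. \<Sum>x\<in>UNIV. \<pi> x * exp (t * f x)) has_real_derivative (\<Sum>x\<in>UNIV. \<pi> x * f x * exp (t * f x))) (at t)"
    proof (rule DERIV_sum)
      fix x
      have "((\<lambda>t. exp (t * f x)) has_real_derivative exp (t * f x) * (1 * f x)) (at t)"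
        by (rule DERIV_chain'[OF DERIV_cmult_right[OF DERIV_ident] DERIV_exp])
      from DERIV_cmult[OF this, of "\<pi> x"]
      show "((\<lambda>t. \<pi> x * exp (t * f x)) has_real_derivative \<pi> x * f x * exp (t * f x)) (at t)"
        by (simp add: mult_ac)
    qed
    thus ?thesis unfolding H_def dH_def Hf_def dHf_def by (simp add: fun_eq_iff)
  qed
  have c1: "(0::real) \<le> 1" and c2: "(0::real) \<le> 2" by simp_all
  define E where "E = dH 0"
  have E0: "E \<ge> 0" unfolding E_def dH_def dHf_def using pi0 f0 by (auto intro!: sum_nonneg)
  define lam where "lam = 1 / (40 * R + 4)"
  have lam0: "lam > 0" "lam \<le> 1" unfolding lam_def using R0 by (auto simp: field_simps)
  have hyp_up: "t * dH t - H t * ln (H t) \<le> (8 * R) * t\<^sup>2 * dH t" if t: "0 < t" "t \<le> lam" for t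
  proof -
    have "t * dHf \<pi> (\<lambda>x. (d_T x A)\<^sup>2) t - Hf \<pi> (\<lambda>x. (d_T x A)\<^sup>2) t * ln (Hf \<pi> (\<lambda>x. (d_T x A)\<^sup>2) t)
      \<le> 8 * 1 * R * t\<^sup>2 * dHf \<pi> (\<lambda>x. (d_T x A)\<^sup>2) t"
    proof (rule ent_bound[OF pi0 pi1 gen rev fs rp A cr R0 c1])
      fix x y assume xy: "x \<noteq> y" and Lp: "L x y > 0" and gt: "(d_T y A)\<^sup>2 < (d_T x A)\<^sup>2"
      show "(exp (t * (d_T x A)\<^sup>2) - exp (t * (d_T y A)\<^sup>2)) * (t * (d_T x A)\<^sup>2 - t * (d_T y A)\<^sup>2)
          \<le> 1 * t\<^sup>2 * exp (t * (d_T x A)\<^sup>2) * ((d_T x A)\<^sup>2 - (d_T y A)\<^sup>2)\<^sup>2"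
        by (rule T_up_real[OF t(1) gt])
    qed simp
    thus ?thesis unfolding H_def dH_def f_def[abs_def] by simp
  qed
  have up: "ln (H lam) / lam - (8 * R) * ln (H lam) \<le> E"
    unfolding E_def by (rule herbst_up[OF Hp D H0 lam0(1) hyp_up])
  define s :: real where "s = - (1/2)"
  have hyp_down: "t * dH t - H t * ln (H t) \<le> (16 * R) * t\<^sup>2 * dH t" if t: "s \<le> t" "t < 0" for t
  proof -
    have t': "- (1/2) \<le> t" using t unfolding s_def by simp
    have "t * dHf \<pi> (\<lambda>x. (d_T x A)\<^sup>2) t - Hf \<pi> (\<lambda>x. (d_T x A)\<^sup>2) t * ln (Hf \<pi> (\<lambda>x. (d_T x A)\<^sup>2) t)
      \<le> 8 * 2 * R * t\<^sup>2 * dHf \<pi> (\<lambda>x. (d_T x A)\<^sup>2) t"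
    proof (rule ent_bound[OF pi0 pi1 gen rev fs rp A cr R0 c2])
      fix x y assume xy: "x \<noteq> y" and Lp: "L x y > 0" and gt: "(d_T y A)\<^sup>2 < (d_T x A)\<^sup>2"
      show "(exp (t * (d_T x A)\<^sup>2) - exp (t * (d_T y A)\<^sup>2)) * (t * (d_T x A)\<^sup>2 - t * (d_T y A)\<^sup>2)
          \<le> 2 * t\<^sup>2 * exp (t * (d_T x A)\<^sup>2) * ((d_T x A)\<^sup>2 - (d_T y A)\<^sup>2)\<^sup>2"
        by (rule T_down_real[OF t' t(2) gt Delta2[of A L x y, OF A fs xy Lp]])
    qed simp
    thus ?thesis unfolding H_def dH_def f_def[abs_def] by simp
  qed
  have s0: "s < 0" unfolding s_def by simp
  have down: "ln (H s) / s - (16 * R) * ln (H s) \<ge> E"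
    unfolding E_def by (rule herbst_down[OF Hp D H0 s0 hyp_down])
  define p where "p = ln (H lam)"
  define q where "q = ln (H s)"
  have h1: "(40 * R + 4) * p - 8 * R * p \<le> E" using up unfolding p_def lam_def by (simp add: mult.commute)
  have h2: "- 2 * q - 16 * R * q \<ge> E" using down unfolding q_def s_def by simp
  have k: "(32 * R + 4) * (p + q) \<le> - E" using h1 h2 by (simp add: algebra_simps)
  have pq: "p + q \<le> 0"
  proof (rule ccontr)
    assume "\<not> p + q \<le> 0"
    hence "(32 * R + 4) * (p + q) > 0" using R0 by (intro mult_pos_pos) auto
    thus False using k E0 by linarith
  qed
  have PA: "(\<Sum>x\<in>A. \<pi> x) \<le> H s"
  proof -
    have "(\<Sum>x\<in>A. \<pi> x) = (\<Sum>x\<in>A. \<pi> x * exp (s * f x))"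
      by (intro sum.cong) (auto simp: f_def dT_zero)
    also have "\<dots> \<le> (\<Sum>x\<in>UNIV. \<pi> x * exp (s * f x))"
      by (rule sum_mono2) (use pi0 in auto)
    finally show ?thesis unfolding H_def Hf_def .
  qed
  have PA0: "(\<Sum>x\<in>A. \<pi> x) \<ge> 0" using pi0 by (simp add: sum_nonneg)
  have ex: "expect \<pi> (\<lambda>x. exp ((d_T x A)\<^sup>2 / (40 * R + 4))) = H lam"
    unfolding expect_def H_def Hf_def lam_def f_def by (simp add: mult_ac)
  have "(\<Sum>x\<in>A. \<pi> x) * H lam \<le> H s * H lam"
    by (rule mult_right_mono[OF PA]) (use Hp[of lam] in simp)
  also have "\<dots> = exp (q + p)" unfolding p_def q_def using Hp by (simp add: exp_add)
  also have "\<dots> \<le> 1" using pq by simp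
  finally show ?thesis unfolding ex .
qed

end
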